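(* Let $G=(V,E)$ be a directed unweighted graph with diameter $D=3h+z$, where $h\ge0$, $z\in\{0,1,2\}$, let $\Delta\ge1$, and let $\tilde h\ge h$ be an integer. Let $\hat D$ be the output of Approx-Diam-Sparse$(G,\tilde h)$. Then $2h+z\le\hat D\le D$.
   Context: $d(u,v)$ is the shortest-path distance from $u$ to $v$; $d^{\mathrm{out}}(v)=\max_u d(v,u)$, $d^{\mathrm{in}}(v)=\max_u d(u,v)$; $B^{\mathrm{out}}(v,r)=\{u:d(v,u)\le r\}$; for $H\subseteq V$, $d(v,H)=\min_{u\in H}d(v,u)$ ($=\infty$ if $H=\emptyset$). Approx-Diam-Sparse$(G,\tilde h)$ with parameter $\Delta$: let $H$ be the set of vertices of outdegree at least $\Delta$; compute $d^{\mathrm{out}}(x)$ for every $x\in H$; compute $d(v,H)$ for all $v$ and pick $w$ maximizing $d(w,H)$; compute $d^{\mathrm{out}}(w)$; let $h'=\min\{\tilde h+1,d(w,H)\}$ and compute $d^{\mathrm{in}}(v)$ for every $v\in B^{\mathrm{out}}(w,h')$; output $\hat D=\max\big(\max_{x\in H}d^{\mathrm{out}}(x),\,d^{\mathrm{out}}(w),\,\max_{v\in B^{\mathrm{out}}(w,h')}d^{\mathrm{in}}(v)\big)$. *)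

theory Defs
  imports Main "HOL-Library.Extended_Nat"
begin

definition dist :: "('a \<times> 'a) set \<Rightarrow> 'a \<Rightarrow> 'a \<Rightarrow> enat" where
  "dist E u v = (if \<exists>n. (u, v) \<in> E ^^ n then enat (LEAST n. (u, v) \<in> E ^^ n) else \<infinity>)"

definition dout :: "'a set \<Rightarrow> ('a \<times> 'a) set \<Rightarrow> 'a \<Rightarrow> enat" where
  "dout V E v = (SUP u\<in>V. dist E v u)"

definition din :: "'a set \<Rightarrow> ('a \<times> 'a) set \<Rightarrow> 'a \<Rightarrow> enat" where
  "din V E v = (SUP u\<in>V. dist E u v)"

definition diameter :: "'a set \<Rightarrow> ('a \<times> 'a) set \<Rightarrow> enat" where
  "diameter V E = (SUP u\<in>V. SUP v\<in>V. dist E u v)"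

definition ball_out :: "'a set \<Rightarrow> ('a \<times> 'a) set \<Rightarrow> 'a \<Rightarrow> enat \<Rightarrow> 'a set" where
  "ball_out V E v r = {u \<in> V. dist E v u \<le> r}"

text \<open>Distance to a set; INF over the empty set is \<infinity>.\<close>
definition dist_set :: "('a \<times> 'a) set \<Rightarrow> 'a \<Rightarrow> 'a set \<Rightarrow> enat" where
  "dist_set E v H = (INF u\<in>H. dist E v u)"

definition outdeg :: "('a \<times> 'a) set \<Rightarrow> 'a \<Rightarrow> nat" where
  "outdeg E v = card {u. (v, u) \<in> E}"

definition high_deg :: "'a set \<Rightarrow> ('a \<times> 'a) set \<Rightarrow> nat \<Rightarrow> 'a set" where
  "high_deg V E \<Delta> = {v \<in> V. outdeg E v \<ge> \<Delta>}"

text \<open>Output of Approx-Diam-Sparse(G, ht) with parameter \<Delta>, given the chosen vertex w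
  (w must maximize dist_set over V; this is imposed in the theorem).
  Max over an empty H contributes nothing (Sup {} = 0).\<close>
definition approx_diam_sparse ::
  "'a set \<Rightarrow> ('a \<times> 'a) set \<Rightarrow> nat \<Rightarrow> nat \<Rightarrow> 'a \<Rightarrow> enat" where
  "approx_diam_sparse V E \<Delta> ht w =
     (let H = high_deg V E \<Delta>;
          h' = min (enat ht + 1) (dist_set E w H)
      in max (SUP x\<in>H. dout V E x)
             (max (dout V E w) (SUP v\<in>ball_out V E w h'. din V E v)))"

end

theory Submission
  imports Defs
begin

lemma dist_le: "(u,v) \<in> E^^n \<Longrightarrow> dist E u v \<le> enat n"
  unfolding dist_def by (auto intro: Least_le)

lemma dist_enat: "dist E u v = enat m \<Longrightarrow> (u,v) \<in> E^^m"
  unfolding dist_def by (auto split: if_splits intro: LeastI_ex)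

lemma dist_triangle: "dist E u w \<le> dist E u v + dist E v w"
proof (cases "dist E u v")
  case (enat m)
  show ?thesis
  proof (cases "dist E v w")
    case (enat n)
    have "(u,v) \<in> E^^m" "(v,w) \<in> E^^n" using dist_enat[OF \<open>dist E u v = enat m\<close>] dist_enat[OF enat] by auto
    hence "(u,w) \<in> E^^(m+n)" by (auto simp: relpow_add)
    hence "dist E u w \<le> enat (m+n)" by (rule dist_le)
    thus ?thesis using \<open>dist E u v = enat m\<close> enat by simp
  qed simp
qed simp

lemma relpow_in_V: "E \<subseteq> V \<times> V \<Longrightarrow> (u,x) \<in> E^^k \<Longrightarrow> u \<in> V \<Longrightarrow> x \<in> V"
  by (induction k arbitrary: x) auto

lemma dist_le_diam: "u \<in> V \<Longrightarrow> v \<in> V \<Longrightarrow> dist E u v \<le> diameter V E"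
  unfolding diameter_def by (meson SUP_upper2 SUP_upper)

theorem lemma9:
  fixes V :: "'a set" and E :: "('a \<times> 'a) set"
    and h z \<Delta> ht :: nat and w :: 'a
  assumes "finite V" and "V \<noteq> {}" and "E \<subseteq> V \<times> V"
    and "\<forall>v. (v, v) \<notin> E"
    and "diameter V E = enat (3 * h + z)" and "z \<le> 2"
    and "\<Delta> \<ge> 1" and "ht \<ge> h"
    and "w \<in> V"
    and "\<forall>v\<in>V. dist_set E v (high_deg V E \<Delta>) \<le> dist_set E w (high_deg V E \<Delta>)"
  shows "enat (2 * h + z) \<le> approx_diam_sparse V E \<Delta> ht w
       \<and> approx_diam_sparse V E \<Delta> ht w \<le> enat (3 * h + z)"
proof
  define H where "H = high_deg V E \<Delta>"
  define h' where "h' = min (enat ht + 1) (dist_set E w H)"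
  have HV: "H \<subseteq> V" unfolding H_def high_deg_def by auto
  have A: "approx_diam_sparse V E \<Delta> ht w = max (SUP x\<in>H. dout V E x)
             (max (dout V E w) (SUP v\<in>ball_out V E w h'. din V E v))"
    unfolding approx_diam_sparse_def H_def h'_def Let_def by simp
  have dout_le: "dout V E x \<le> diameter V E" if "x \<in> V" for x
    unfolding dout_def using dist_le_diam that by (meson SUP_least)
  have din_le: "din V E x \<le> diameter V E" if "x \<in> V" for x
    unfolding din_def using dist_le_diam that by (meson SUP_least)
  have BV: "ball_out V E w h' \<subseteq> V" unfolding ball_out_def by auto
  show "approx_diam_sparse V E \<Delta> ht w \<le> enat (3 * h + z)"
    unfolding A using assms(5) dout_le din_le HV BV \<open>w \<in> V\<close>
    by (metis (no_types, lifting) SUP_least max.boundedI subsetD)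
  show "enat (2 * h + z) \<le> approx_diam_sparse V E \<Delta> ht w"
  proof (cases "3*h+z = 0")
    case True thus ?thesis by (simp add: zero_enat_def[symmetric])
  next
    case False
    define N where "N = 3*h+z"
    have "enat (N - 1) < diameter V E" using False assms(5) N_def by simp
    then obtain a b where ab: "a \<in> V" "b \<in> V" "enat (N-1) < dist E a b"
      unfolding diameter_def less_SUP_iff by blast
    have abN: "dist E a b \<ge> enat N"
      using ab(3) False N_def by (cases "dist E a b") auto
    have finV: "\<exists>p. dist E u v = enat p \<and> p \<le> N" if "u \<in> V" "v \<in> V" for u v
      using dist_le_diam[OF that, of E] assms(5) N_def by (cases "dist E u v") auto
    show ?thesis
    proof (cases "dist_set E a H < enat (h+1)")
      case True
      then obtain x where x: "x \<in> H" "dist E a x < enat (h+1)"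
        unfolding dist_set_def INF_less_iff by blast
      have xV: "x \<in> V" using x HV by auto
      obtain p where p: "dist E a x = enat p" "p \<le> h" using x(2) by (cases "dist E a x") auto
      obtain q where q: "dist E x b = enat q" using finV[OF xV ab(2)] by auto
      have "enat N \<le> enat p + enat q" using abN dist_triangle[of E a b x] p q by (metis order_trans)
      hence "2*h+z \<le> q" using p N_def by simp
      hence "enat (2*h+z) \<le> dout V E x" unfolding dout_def using q ab(2)
        by (metis SUP_upper2 enat_ord_simps(1))
      also have "\<dots> \<le> (SUP x\<in>H. dout V E x)" using x(1) by (rule SUP_upper)
      finally show ?thesis unfolding A by (simp add: le_max_iff_disj)
    next
      case False
      hence "enat (h+1) \<le> dist_set E w H" using assms(10) ab(1) H_def by fastforce
      hence h'ge: "enat (h+1) \<le> h'" unfolding h'_def using assms(8) by (simp add: one_enat_def)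
      show ?thesis
      proof (cases "enat (2*h+z) \<le> dout V E w")
        case True thus ?thesis unfolding A by (simp add: le_max_iff_disj)
      next
        case False
        hence wb: "dist E w b < enat (2*h+z)" unfolding dout_def using ab(2)
          by (meson SUP_upper less_le_trans not_le)
        then obtain m where m: "dist E w b = enat m" "m < 2*h+z" by (cases "dist E w b") auto
        have path: "(w,b) \<in> E^^m" using dist_enat[OF m(1)] .
        show ?thesis
        proof (cases "m \<le> h+1")
          case True
          hence "b \<in> ball_out V E w h'" unfolding ball_out_def using ab(2) m h'ge
            by (metis (mono_tags, lifting) enat_ord_simps(1) mem_Collect_eq order_trans)
          moreover have "enat (2*h+z) \<le> din V E b"
            proof -
            have "enat (2*h+z) \<le> enat N" using N_def by simp
            also have "\<dots> \<le> dist E a b" by (rule abN)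
            finally have "enat (2*h+z) \<le> dist E a b" .
            then show ?thesis unfolding din_def by (rule SUP_upper2[OF ab(1)])
          qed
          ultimately have "enat (2*h+z) \<le> (SUP v\<in>ball_out V E w h'. din V E v)"
            by (meson SUP_upper2)
          thus ?thesis unfolding A by (simp add: le_max_iff_disj)
        next
          case False
          have "(w,b) \<in> E^^((h+1) + (m-(h+1)))" using False path by simp
          then obtain v where v: "(w,v) \<in> E^^(h+1)" "(v,b) \<in> E^^(m-(h+1))"
            unfolding relpow_add by blast
          have vV: "v \<in> V" using relpow_in_V[OF assms(3) v(1) \<open>w \<in> V\<close>] .
          have "v \<in> ball_out V E w h'" unfolding ball_out_def using vV dist_le[OF v(1)] h'ge
            by auto
          obtain p where p: "dist E a v = enat p" using finV[OF ab(1) vV] by auto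
          have "enat N \<le> enat p + enat (m-(h+1))"
            using abN dist_triangle[of E a b v] p dist_le[OF v(2)]
            by (metis add_left_mono order_trans)
          hence "2*h+z \<le> p" using m(2) N_def assms(6) by simp
          hence "enat (2*h+z) \<le> din V E v" unfolding din_def using p ab(1)
            by (metis SUP_upper2 enat_ord_simps(1))
          hence "enat (2*h+z) \<le> (SUP v\<in>ball_out V E w h'. din V E v)"
            using \<open>v \<in> ball_out V E w h'\<close> by (meson SUP_upper2)
          thus ?thesis unfolding A by (simp add: le_max_iff_disj)
        qed
      qed
    qed
  qed
qed

end
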